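(* Let $T$ be an infinite, locally finite tree with maximum degree at least three and finite metric dimension. Then $$\beta(T)=\sum_{v\in V(T),\ \deg(v)\ge 3}\max\{P_T(v)-1,0\}.$$ Moreover, a set $S\subseteq V(T)$ is a metric basis of $T$ if and only if it is obtained as follows: for each vertex $v$ with $P_T(v)=k\ge 2$, choose $k-1$ vertices different from $v$ lying on $k-1$ distinct branch paths of $T$ at $v$ (and $S$ consists exactly of all the chosen vertices).
   Context: $d$ denotes shortest-path distance. A vertex $x$ resolves $u,v$ if $d(u,x)\ne d(v,x)$; a set of vertices is a resolving set if every pair of distinct vertices is resolved by some vertex of it. The metric dimension $\beta(T)$ is the minimum cardinality of a resolving set if a finite one exists, and $\infty$ otherwise; a metric basis is a resolving set of minimum cardinality. For a vertex $v$ of $T$, a branch of $T$ at $v$ is a maximal subtree of $T$ having $v$ as a leaf (so there are exactly $\deg(v)$ branches at $v$). A branch path of $T$ at $v$ is a branch at $v$ that is either a finite path or a one-way infinite path. $P_T(v)$ denotes the number of branch paths of $T$ at $v$. *)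

theory Defs
  imports Main "HOL-Library.Extended_Nat" "HOL-Library.Groups_Big_Fun"
begin

definition graph :: "'a set \<Rightarrow> ('a \<Rightarrow> 'a \<Rightarrow> bool) \<Rightarrow> bool" where
  "graph V E \<longleftrightarrow> (\<forall>x y. E x y \<longrightarrow> x \<in> V \<and> y \<in> V \<and> E y x \<and> x \<noteq> y)"

definition walk :: "('a \<Rightarrow> 'a \<Rightarrow> bool) \<Rightarrow> 'a list \<Rightarrow> bool" where
  "walk E xs \<longleftrightarrow> xs \<noteq> [] \<and> (\<forall>i. Suc i < length xs \<longrightarrow> E (xs ! i) (xs ! Suc i))"

definition reach :: "('a \<Rightarrow> 'a \<Rightarrow> bool) \<Rightarrow> 'a set \<Rightarrow> 'a \<Rightarrow> 'a \<Rightarrow> bool" where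
  "reach E A x y \<longleftrightarrow> x \<in> A \<and> (\<lambda>a b. E a b \<and> a \<in> A \<and> b \<in> A)\<^sup>*\<^sup>* x y"

definition connected_graph :: "'a set \<Rightarrow> ('a \<Rightarrow> 'a \<Rightarrow> bool) \<Rightarrow> bool" where
  "connected_graph V E \<longleftrightarrow> (\<forall>x\<in>V. \<forall>y\<in>V. reach E V x y)"

definition acyclic_graph :: "'a set \<Rightarrow> ('a \<Rightarrow> 'a \<Rightarrow> bool) \<Rightarrow> bool" where
  "acyclic_graph V E \<longleftrightarrow>
     \<not> (\<exists>xs. 3 \<le> length xs \<and> distinct xs \<and> set xs \<subseteq> V \<and> walk E xs \<and> E (last xs) (hd xs))"

definition tree :: "'a set \<Rightarrow> ('a \<Rightarrow> 'a \<Rightarrow> bool) \<Rightarrow> bool" where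
  "tree V E \<longleftrightarrow> graph V E \<and> V \<noteq> {} \<and> connected_graph V E \<and> acyclic_graph V E"

definition locally_finite :: "'a set \<Rightarrow> ('a \<Rightarrow> 'a \<Rightarrow> bool) \<Rightarrow> bool" where
  "locally_finite V E \<longleftrightarrow> (\<forall>v\<in>V. finite {w. E v w})"

definition deg :: "('a \<Rightarrow> 'a \<Rightarrow> bool) \<Rightarrow> 'a \<Rightarrow> nat" where
  "deg E v = card {w. E v w}"

definition dist :: "('a \<Rightarrow> 'a \<Rightarrow> bool) \<Rightarrow> 'a \<Rightarrow> 'a \<Rightarrow> nat" where
  "dist E u v = (LEAST n. \<exists>xs. walk E xs \<and> hd xs = u \<and> last xs = v \<and> length xs = Suc n)"

definition resolving :: "'a set \<Rightarrow> ('a \<Rightarrow> 'a \<Rightarrow> bool) \<Rightarrow> 'a set \<Rightarrow> bool" where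
  "resolving V E S \<longleftrightarrow> S \<subseteq> V \<and>
     (\<forall>u\<in>V. \<forall>v\<in>V. u \<noteq> v \<longrightarrow> (\<exists>x\<in>S. dist E u x \<noteq> dist E v x))"

definition metric_dim :: "'a set \<Rightarrow> ('a \<Rightarrow> 'a \<Rightarrow> bool) \<Rightarrow> enat" where
  "metric_dim V E =
     (if \<exists>S. finite S \<and> resolving V E S
      then enat (LEAST n. \<exists>S. finite S \<and> resolving V E S \<and> card S = n)
      else \<infinity>)"

definition metric_basis :: "'a set \<Rightarrow> ('a \<Rightarrow> 'a \<Rightarrow> bool) \<Rightarrow> 'a set \<Rightarrow> bool" where
  "metric_basis V E S \<longleftrightarrow> finite S \<and> resolving V E S \<and> enat (card S) = metric_dim V E"

text \<open>The branch at v through the neighbour w: v together with the component of T - v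
  containing w (maximal subtree having v as a leaf).\<close>
definition branch :: "'a set \<Rightarrow> ('a \<Rightarrow> 'a \<Rightarrow> bool) \<Rightarrow> 'a \<Rightarrow> 'a \<Rightarrow> 'a set" where
  "branch V E v w = insert v {x. reach E (V - {v}) w x}"

definition branches :: "'a set \<Rightarrow> ('a \<Rightarrow> 'a \<Rightarrow> bool) \<Rightarrow> 'a \<Rightarrow> 'a set set" where
  "branches V E v = {branch V E v w | w. E v w}"

definition is_path_or_ray :: "('a \<Rightarrow> 'a \<Rightarrow> bool) \<Rightarrow> 'a set \<Rightarrow> bool" where
  "is_path_or_ray E B \<longleftrightarrow>
     (\<exists>n f. inj_on f {..<n} \<and> B = f ` {..<n} \<and>
        (\<forall>i<n. \<forall>j<n. E (f i) (f j) \<longleftrightarrow> (i = Suc j \<or> j = Suc i)))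
   \<or> (\<exists>f::nat \<Rightarrow> 'a. inj f \<and> B = range f \<and>
        (\<forall>i j. E (f i) (f j) \<longleftrightarrow> (i = Suc j \<or> j = Suc i)))"

definition branch_paths :: "'a set \<Rightarrow> ('a \<Rightarrow> 'a \<Rightarrow> bool) \<Rightarrow> 'a \<Rightarrow> 'a set set" where
  "branch_paths V E v = {B \<in> branches V E v. is_path_or_ray E B}"

definition P_T :: "'a set \<Rightarrow> ('a \<Rightarrow> 'a \<Rightarrow> bool) \<Rightarrow> 'a \<Rightarrow> nat" where
  "P_T V E v = card (branch_paths V E v)"

end

theory Submission
  imports Defs
begin



lemma walk_Nil[simp]: "\<not> walk E []" by (simp add: walk_def)
lemma walk_single[simp]: "walk E [x]" by (simp add: walk_def)
lemma walk_Cons2[simp]: "walk E (x#y#xs) \<longleftrightarrow> E x y \<and> walk E (y#xs)"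
proof
  assume "walk E (x#y#xs)"
  then show "E x y \<and> walk E (y#xs)"
    unfolding walk_def by (metis Suc_less_eq length_Cons list.discI nth_Cons_0 nth_Cons_Suc zero_less_Suc)
next
  assume h: "E x y \<and> walk E (y#xs)"
  show "walk E (x#y#xs)" unfolding walk_def
  proof (intro conjI allI impI)
    fix i assume "Suc i < length (x#y#xs)"
    then show "E ((x#y#xs)!i) ((x#y#xs)!Suc i)"
      using h unfolding walk_def by (cases i) auto
  qed simp
qed

lemma walk_append:
  assumes "xs \<noteq> []" "ys \<noteq> []"
  shows "walk E (xs @ ys) \<longleftrightarrow> walk E xs \<and> walk E ys \<and> E (last xs) (hd ys)"
  using assms
proof (induction xs rule: list_nonempty_induct)
  case (single x) then show ?case by (cases ys) auto
next
  case (cons x xs) then show ?case by (cases xs) auto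
qed

lemma walk_ConsD: "walk E (x#xs) \<Longrightarrow> xs \<noteq> [] \<Longrightarrow> walk E xs \<and> E x (hd xs)"
  by (cases xs) auto

lemma walk_distinct:
  "walk E xs \<Longrightarrow> \<exists>ys. walk E ys \<and> hd ys = hd xs \<and> last ys = last xs \<and> set ys \<subseteq> set xs
     \<and> distinct ys \<and> length ys \<le> length xs"
proof (induction "length xs" arbitrary: xs rule: less_induct)
  case less
  show ?case
  proof (cases "distinct xs")
    case True then show ?thesis using less.prems by blast
  next
    case False
    then obtain as z bs cs where xs: "xs = as @ [z] @ bs @ [z] @ cs"
      using not_distinct_decomp by blast
    have w1: "walk E (z # cs)" using less.prems walk_append[of "as @ [z] @ bs" "z#cs" E] xs by simp
    have w: "walk E (as @ z # cs)"
    proof (cases "as = []")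
      case True then show ?thesis using w1 by simp
    next
      case False
      have "walk E (as @ (z # bs @ [z] @ cs))" using less.prems xs by simp
      then have "walk E as \<and> E (last as) z" using walk_append[of as "z # bs @ [z] @ cs" E] False by simp
      then show ?thesis using walk_append[of as "z#cs" E] False w1 by simp
    qed
    have "length (as @ z # cs) < length xs" using xs by simp
    from less.hyps[OF this w] obtain ys where ys: "walk E ys \<and> hd ys = hd (as @ z # cs) \<and>
      last ys = last (as @ z # cs) \<and> set ys \<subseteq> set (as @ z # cs) \<and> distinct ys \<and> length ys \<le> length (as @ z # cs)"
      by blast
    have "hd (as @ z # cs) = hd xs" using xs by (cases as) auto
    moreover have "last (as @ z # cs) = last xs" using xs by (cases cs) auto
    moreover have "set (as @ z # cs) \<subseteq> set xs" using xs by auto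
    moreover have "length (as @ z # cs) \<le> length xs" using xs by simp
    ultimately show ?thesis using ys by (metis order_trans)
  qed
qed

lemma walk_reach: assumes "walk E xs" "set xs \<subseteq> A" shows "reach E A (hd xs) (last xs)"
proof -
  have "xs \<noteq> []" using assms by auto
  then show ?thesis using assms
proof (induction xs rule: list_nonempty_induct)
  case (single x) then show ?case by (simp add: reach_def)
next
  case (cons x xs)
  then have "reach E A (hd xs) (last xs)" using walk_ConsD by fastforce
  moreover have "E x (hd xs)" "x \<in> A" "hd xs \<in> A" using cons walk_ConsD[of E x xs] by (auto simp: hd_in_set subsetD)
  ultimately show ?case unfolding reach_def
    by (auto intro: converse_rtranclp_into_rtranclp)
qed
qed

lemma reach_walk: "reach E A x y \<Longrightarrow> \<exists>xs. walk E xs \<and> hd xs = x \<and> last xs = y \<and> set xs \<subseteq> A"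
  unfolding reach_def
proof (elim conjE)
  assume x: "x \<in> A" and r: "(\<lambda>a b. E a b \<and> a \<in> A \<and> b \<in> A)\<^sup>*\<^sup>* x y"
  from r show ?thesis
  proof (induction rule: rtranclp_induct)
    case base then show ?case using x by (intro exI[of _ "[x]"]) auto
  next
    case (step y z)
    then obtain xs where xs: "walk E xs" "hd xs = x" "last xs = y" "set xs \<subseteq> A" by blast
    have "xs \<noteq> []" using xs by auto
    then have "walk E (xs @ [z])" using xs step walk_append[of xs "[z]" E] by simp
    then show ?case using xs step \<open>xs \<noteq> []\<close> by (intro exI[of _ "xs @ [z]"]) auto
  qed
qed

lemma reach_in: "reach E A x y \<Longrightarrow> x \<in> A \<and> y \<in> A"
  unfolding reach_def by (metis (no_types, lifting) rtranclp.cases)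

lemma reach_trans: "reach E A x y \<Longrightarrow> reach E A y z \<Longrightarrow> reach E A x z"
  unfolding reach_def by auto

lemma reach_mono: "A \<subseteq> B \<Longrightarrow> reach E A x y \<Longrightarrow> reach E B x y"
  unfolding reach_def
  by (auto elim!: rtranclp_mono[THEN predicate2D, rotated])

lemma reach_restrict:
  assumes "reach E A b z" "\<And>w. reach E A b w \<Longrightarrow> w \<notin> C"
  shows "reach E (A - C) b z"
proof -
  from assms(1) have bA: "b \<in> A" and r: "(\<lambda>a b. E a b \<and> a \<in> A \<and> b \<in> A)\<^sup>*\<^sup>* b z" unfolding reach_def by auto
  from r have "reach E A b z \<longrightarrow> reach E (A - C) b z"
  proof (induction rule: rtranclp_induct)
    case base then show ?case using assms(2) unfolding reach_def by auto
  next
    case (step y z)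
    have ry: "reach E A b y" using step(1) bA unfolding reach_def by auto
    have rz: "reach E A b z" using ry step(2) unfolding reach_def by (auto intro: rtranclp.rtrancl_into_rtrancl)
    then show ?case using step ry assms(2)[OF ry] assms(2)[OF rz] unfolding reach_def
      by (auto intro: rtranclp.rtrancl_into_rtrancl)
  qed
  then show ?thesis using assms(1) by blast
qed




locale tr =
  fixes V :: "'a set" and E :: "'a \<Rightarrow> 'a \<Rightarrow> bool"
  assumes tree: "tree V E"
begin

lemma g: "E x y \<Longrightarrow> x \<in> V \<and> y \<in> V \<and> E y x \<and> x \<noteq> y"
  using tree unfolding tree_def graph_def by blast

lemma conn: "x \<in> V \<Longrightarrow> y \<in> V \<Longrightarrow> reach E V x y"
  using tree unfolding tree_def connected_graph_def by blast

lemma acyc: "\<not> (3 \<le> length xs \<and> distinct xs \<and> set xs \<subseteq> V \<and> walk E xs \<and> E (last xs) (hd xs))"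
  using tree unfolding tree_def acyclic_graph_def by blast

lemma walk_V: "walk E xs \<Longrightarrow> hd xs \<in> V \<Longrightarrow> set xs \<subseteq> V"
proof (induction xs rule: induct_list012)
  case (3 x y zs) then show ?case using g by auto
qed auto

lemma walk_rev: "walk E xs \<Longrightarrow> walk E (rev xs)"
proof (induction xs rule: induct_list012)
  case (3 x y zs)
  then have "walk E (rev zs @ [y])" by simp
  then show ?case using walk_append[of "rev zs @ [y]" "[x]" E] 3 g by simp
qed auto

lemma reach_sym: "reach E A x y \<Longrightarrow> reach E A y x"
proof -
  assume "reach E A x y"
  from reach_walk[OF this] obtain xs where xs: "walk E xs" "hd xs = x" "last xs = y" "set xs \<subseteq> A"
    by blast
  have "xs \<noteq> []" using xs(1) by auto
  have "reach E A (hd (rev xs)) (last (rev xs))"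
    by (rule walk_reach) (use walk_rev[OF xs(1)] xs(4) in auto)
  then show ?thesis using \<open>xs \<noteq> []\<close> xs(2,3) by (simp add: hd_rev last_rev)
qed

lemma ex_walk: "u \<in> V \<Longrightarrow> v \<in> V \<Longrightarrow> \<exists>xs. walk E xs \<and> hd xs = u \<and> last xs = v"
proof -
  assume "u \<in> V" "v \<in> V"
  from reach_walk[OF conn[OF this]] show ?thesis by blast
qed

lemma dist_le: "walk E xs \<Longrightarrow> hd xs = u \<Longrightarrow> last xs = v \<Longrightarrow> dist E u v \<le> length xs - 1"
proof -
  assume a: "walk E xs" "hd xs = u" "last xs = v"
  then have "xs \<noteq> []" by auto
  then have "length xs = Suc (length xs - 1)" by simp
  then show ?thesis unfolding dist_def using a by (intro Least_le) blast
qed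

lemma dist_walk: assumes "u \<in> V" "v \<in> V"
  shows "\<exists>xs. walk E xs \<and> hd xs = u \<and> last xs = v \<and> length xs = Suc (dist E u v)"
proof -
  obtain xs where "walk E xs" "hd xs = u" "last xs = v" using ex_walk assms by blast
  moreover then have "xs \<noteq> []" by auto
  ultimately have "\<exists>n xs. walk E xs \<and> hd xs = u \<and> last xs = v \<and> length xs = Suc n"
    by (intro exI[of _ "length xs - 1"] exI[of _ xs]) simp
  then show ?thesis unfolding dist_def by (rule LeastI_ex)
qed

lemma dist_self[simp]: "dist E u u = 0"
  using dist_le[of "[u]" u u] by simp

lemma dist_0: assumes "u \<in> V" "v \<in> V" "dist E u v = 0" shows "u = v"
proof -
  obtain xs where "walk E xs \<and> hd xs = u \<and> last xs = v \<and> length xs = Suc 0"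
    using dist_walk[OF assms(1,2)] assms(3) by auto
  then show ?thesis by (cases xs) auto
qed

lemma dist_sym: assumes "u \<in> V" "v \<in> V" shows "dist E u v = dist E v u"
proof -
  have "dist E u v \<le> dist E v u" if a: "u \<in> V" "v \<in> V" for u v
  proof -
    obtain xs where "walk E xs \<and> hd xs = v \<and> last xs = u \<and> length xs = Suc (dist E v u)"
      using dist_walk[of v u] a by blast
    then show ?thesis using dist_le[of "rev xs" u v] walk_rev
      by (metis diff_Suc_1 hd_rev last_rev length_rev)
  qed
  then show ?thesis using assms by (simp add: order_antisym)
qed

lemma dist_edge: assumes "E u v" shows "dist E u v = 1"
proof -
  have "dist E u v \<le> 1" using dist_le[of "[u,v]" u v] assms by simp
  moreover have "dist E u v \<noteq> 0" using dist_0 g assms by blast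
  ultimately show ?thesis by simp
qed

lemma dist_1: assumes "u \<in> V" "v \<in> V" "dist E u v = 1" shows "E u v"
proof -
  obtain xs where "walk E xs \<and> hd xs = u \<and> last xs = v \<and> length xs = Suc 1"
    using dist_walk[OF assms(1,2)] assms(3) by auto
  then show ?thesis by (auto simp: length_Suc_conv)
qed

lemma dist_tri: assumes "u \<in> V" "v \<in> V" "w \<in> V" shows "dist E u w \<le> dist E u v + dist E v w"
proof -
  obtain xs where xs: "walk E xs \<and> hd xs = u \<and> last xs = v \<and> length xs = Suc (dist E u v)"
    using dist_walk[OF assms(1,2)] by blast
  obtain ys where ys: "walk E ys \<and> hd ys = v \<and> last ys = w \<and> length ys = Suc (dist E v w)"
    using dist_walk[OF assms(2,3)] by blast
  have wz: "walk E (xs @ tl ys) \<and> hd (xs @ tl ys) = u \<and> last (xs @ tl ys) = w"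
  proof (cases "tl ys")
    case Nil
    then have "ys = [v]" using ys by (cases ys) auto
    then show ?thesis using xs ys Nil by auto
  next
    case (Cons y zs)
    have ys': "ys = v # y # zs" using ys Cons by (cases ys) auto
    have "xs \<noteq> []" using xs by auto
    then show ?thesis using walk_append[of xs "y # zs" E] xs ys ys' Cons by auto
  qed
  have "length (xs @ tl ys) = Suc (dist E u v + dist E v w)" using xs ys by simp
  then show ?thesis using dist_le[of "xs @ tl ys" u w] wz by simp
qed

lemma dist_shortest_distinct:
  assumes "walk E xs" "hd xs = u" "last xs = v" "length xs = Suc (dist E u v)"
  shows "distinct xs"
proof -
  obtain ys where ys0: "walk E ys" "hd ys = hd xs" "last ys = last xs" "set ys \<subseteq> set xs" "distinct ys"
    "length ys \<le> length xs" using walk_distinct[OF assms(1)] by blast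
  then have ys: "walk E ys" "hd ys = u" "last ys = v" "set ys \<subseteq> set xs" "distinct ys"
    "length ys \<le> length xs" using assms by auto
  have "dist E u v \<le> length ys - 1" using dist_le ys(1,2,3) by blast
  moreover have "ys \<noteq> []" using ys(1) by auto
  ultimately have "length ys = length xs" using ys(6) assms(4) by (cases ys) auto
  have "card (set ys) \<le> card (set xs)" using ys(4) by (simp add: card_mono)
  moreover have "card (set ys) = length ys" using ys(5) by (simp add: distinct_card)
  moreover have "card (set xs) \<le> length xs" by (rule card_length)
  ultimately have "card (set xs) = length xs" using \<open>length ys = length xs\<close> by simp
  then show ?thesis by (simp add: card_distinct)
qed

end



context tr begin

abbreviation br where "br \<equiv> branch V E"
abbreviation d where "d \<equiv> dist E"

lemma branch_cases: "x \<in> br v a \<Longrightarrow> x = v \<or> (x \<noteq> v \<and> reach E (V - {v}) a x)"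
  unfolding branch_def by auto

lemma branch_V: assumes "E v a" shows "br v a \<subseteq> V"
proof
  fix x assume "x \<in> br v a"
  then show "x \<in> V"
  proof (cases "x = v")
    case True then show ?thesis using g[OF assms] by simp
  next
    case False
    then have "reach E (V - {v}) a x" using \<open>x \<in> br v a\<close> branch_cases by blast
    then show ?thesis using reach_in[of E "V - {v}" a x] by simp
  qed
qed

lemma branch_v: "v \<in> br v a" unfolding branch_def by auto

lemma branch_self: assumes "E v a" shows "a \<in> br v a"
proof -
  have "a \<in> V - {v}" using g[OF assms] by auto
  then have "reach E (V - {v}) a a" unfolding reach_def by auto
  then show ?thesis unfolding branch_def by auto
qed

lemma branch_nb: assumes "E v a" "x \<in> br v a" "x \<noteq> v" "E x z" "z \<noteq> v"
  shows "z \<in> br v a"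
proof -
  have r: "reach E (V - {v}) a x" using assms branch_cases by blast
  have "x \<in> V - {v}" "z \<in> V - {v}" using g[OF assms(4)] assms by auto
  then have "reach E (V - {v}) x z" using assms(4) unfolding reach_def by auto
  with r have "reach E (V - {v}) a z" by (rule reach_trans)
  then show ?thesis unfolding branch_def by auto
qed

lemma branch_nbs: assumes "E v a" "x \<in> br v a" "x \<noteq> v" shows "{w. E x w} \<subseteq> br v a"
  using branch_nb[OF assms] branch_v by blast

lemma branch_unique: assumes "E v a" "E v b" "x \<in> br v a" "x \<in> br v b" "x \<noteq> v"
  shows "a = b"
proof (rule ccontr)
  assume ab: "a \<noteq> b"
  have r1: "reach E (V - {v}) a x" using branch_cases[OF assms(3)] assms(5) by blast
  have r2: "reach E (V - {v}) b x" using branch_cases[OF assms(4)] assms(5) by blast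
  have "reach E (V - {v}) a b" using reach_trans[OF r1 reach_sym[OF r2]] .
  from reach_walk[OF this] obtain xs where xs: "walk E xs" "hd xs = a" "last xs = b" "set xs \<subseteq> V - {v}"
    by blast
  obtain ys where ys0: "walk E ys" "hd ys = hd xs" "last ys = last xs" "set ys \<subseteq> set xs" "distinct ys"
    using walk_distinct[OF xs(1)] by blast
  then have ys: "walk E ys" "hd ys = a" "last ys = b" "set ys \<subseteq> V - {v}" "distinct ys"
    using xs by auto
  obtain rest where ysr: "ys = a # rest" using ys(1,2) by (cases ys) auto
  have "rest \<noteq> []" using ysr ys(3) ab by auto
  then have "2 \<le> length ys" using ysr by (cases rest) auto
  have "walk E (v # ys)" using ysr ys(1) assms(1) by simp
  moreover have "distinct (v # ys)" using ys(4,5) by auto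
  moreover have "set (v # ys) \<subseteq> V" using ys(4) g[OF assms(1)] by auto
  moreover have "E (last (v # ys)) (hd (v # ys))" using ys(3) ysr g[OF assms(2)] by simp
  moreover have "3 \<le> length (v # ys)" using \<open>2 \<le> length ys\<close> by simp
  ultimately show False using acyc[of "v # ys"] by blast
qed

lemma toward: assumes "v \<in> V" "x \<in> V" "x \<noteq> v"
  shows "\<exists>p. E v p \<and> x \<in> br v p \<and> d v x = Suc (d p x)"
proof -
  obtain xs where xs: "walk E xs" "hd xs = v" "last xs = x" "length xs = Suc (d v x)"
    using dist_walk[OF assms(1,2)] by blast
  have dis: "distinct xs" using dist_shortest_distinct[OF xs] .
  obtain p rest where xsr: "xs = v # p # rest"
  proof (cases xs)
    case Nil then show ?thesis using xs by simp
  next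
    case (Cons y ys)
    then show ?thesis using xs assms(3) that by (cases ys) auto
  qed
  have E1: "E v p" and w: "walk E (p # rest)" using xs(1) xsr by auto
  have "set (p # rest) \<subseteq> V" using walk_V[OF w] g[OF E1] by simp
  moreover have "v \<notin> set (p # rest)" using dis xsr by simp
  ultimately have "set (p # rest) \<subseteq> V - {v}" by blast
  then have "reach E (V - {v}) (hd (p # rest)) (last (p # rest))" by (rule walk_reach[OF w])
  then have "reach E (V - {v}) p x" using xs(3) xsr by simp
  then have xb: "x \<in> br v p" unfolding branch_def by auto
  have "d p x \<le> length (p # rest) - 1" using dist_le[OF w refl refl] xs(3) xsr by simp
  moreover have "d v x \<le> d v p + d p x" using dist_tri[OF assms(1) _ assms(2), of p] g[OF E1] by blast
  moreover have "d v p = 1" using dist_edge[OF E1] .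
  ultimately have "d v x = Suc (d p x)" using xs(4) xsr by simp
  then show ?thesis using E1 xb by blast
qed

lemma branch_dist: assumes "E v p" "x \<in> br v p" "x \<noteq> v" shows "d v x = Suc (d p x)"
proof -
  have "x \<in> V" using branch_V assms by blast
  then obtain q where q: "E v q" "x \<in> br v q" "d v x = Suc (d q x)"
    using toward[OF _ _ assms(3)] g[OF assms(1)] by blast
  then have "q = p" using branch_unique[OF q(1) assms(1) q(2) assms(2) assms(3)] by blast
  then show ?thesis using q by simp
qed

lemma branch_cut: assumes "E v a" "x \<in> br v a" "x \<noteq> v" "y \<in> V" "y \<notin> br v a - {v}"
  shows "d x y = d x v + d v y"
proof -
  have xV: "x \<in> V" using branch_V[OF assms(1)] assms(2) by blast
  have vV: "v \<in> V" using g[OF assms(1)] by blast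
  obtain ws where ws: "walk E ws" "hd ws = x" "last ws = y" "length ws = Suc (d x y)"
    using dist_walk[OF xV assms(4)] by blast
  have "v \<in> set ws"
  proof (rule ccontr)
    assume "v \<notin> set ws"
    moreover have "set ws \<subseteq> V" using walk_V[OF ws(1)] ws(2) xV by simp
    ultimately have "set ws \<subseteq> V - {v}" by blast
    then have "reach E (V - {v}) x y" using walk_reach[OF ws(1), of "V - {v}"] ws(2,3) by simp
    moreover have "reach E (V - {v}) a x" using branch_cases[OF assms(2)] assms(3) by blast
    ultimately have ry: "reach E (V - {v}) a y" using reach_trans by metis
    then have "y \<in> br v a" unfolding branch_def by auto
    moreover have "y \<noteq> v" using reach_in[OF ry] by auto
    ultimately show False using assms(5) by blast
  qed
  then obtain as bs where wsp: "ws = as @ v # bs" by (meson split_list)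
  have w1: "walk E (as @ [v])" and w2: "walk E (v # bs)"
  proof -
    show "walk E (v # bs)" using ws(1) wsp walk_append[of "as" "v # bs" E] by (cases as) auto
    show "walk E (as @ [v])"
    proof (cases bs)
      case Nil then show ?thesis using ws(1) wsp by simp
    next
      case (Cons b bs')
      then show ?thesis using ws(1) wsp walk_append[of "as @ [v]" "b # bs'" E] by simp
    qed
  qed
  have "d x v \<le> length as" using dist_le[OF w1] ws(2) wsp by (cases as) auto
  moreover have "d v y \<le> length bs" using dist_le[OF w2] ws(3) wsp by (cases bs) auto
  moreover have "d x y \<le> d x v + d v y" using dist_tri[OF xV vV assms(4)] .
  ultimately show ?thesis using ws(4) wsp by simp
qed

lemma branch_sub: assumes "E r a" "y \<in> br r a" "y \<noteq> r" "E y b" "r \<notin> br y b"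
  shows "br y b \<subseteq> br r a - {r}"
proof
  fix z assume z: "z \<in> br y b"
  show "z \<in> br r a - {r}"
  proof (cases "z = y")
    case True then show ?thesis using assms by auto
  next
    case False
    then have rz: "reach E (V - {y}) b z" using z branch_cases by blast
    have "reach E (V - {y} - {r}) b z"
      by (rule reach_restrict[OF rz]) (use assms(5) in \<open>auto simp: branch_def\<close>)
    then have "reach E (V - {r}) b z" by (rule reach_mono[rotated]) auto
    moreover have "b \<in> br r a"
      using branch_nb[OF assms(1,2,3,4)] assms(5) branch_self[OF assms(4)] by blast
    moreover have "b \<noteq> r" using assms(5) branch_self[OF assms(4)] by blast
    moreover have "reach E (V - {r}) a b" using branch_cases[OF \<open>b \<in> br r a\<close>] \<open>b \<noteq> r\<close> by blast
    ultimately have "reach E (V - {r}) a z"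
      using reach_trans by metis
    moreover have "z \<noteq> r" using z assms(5) by blast
    ultimately show ?thesis unfolding branch_def by auto
  qed
qed

lemma toward_all: assumes "E u p" "w \<in> br u p" "w \<noteq> u" "s \<in> V" "d u s = d w s"
  shows "s \<in> br u p \<and> s \<noteq> u"
proof -
  have uV: "u \<in> V" and wV: "w \<in> V" using g[OF assms(1)] branch_V[OF assms(1)] assms(2) by auto
  have "s \<noteq> u"
  proof
    assume "s = u"
    then have "d w u = 0" using assms(5) by simp
    then show False using dist_0[OF wV uV] assms(3) by blast
  qed
  moreover obtain b where b: "E u b" "s \<in> br u b" using toward[OF uV assms(4)] \<open>s \<noteq> u\<close> by blast
  have "b = p"
  proof (rule ccontr)
    assume "b \<noteq> p"
    then have "w \<notin> br u b - {u}" using branch_unique[OF b(1) assms(1) _ assms(2)] by blast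
    then have "d s w = d s u + d u w" using branch_cut[OF b(1,2) \<open>s \<noteq> u\<close> wV] by blast
    moreover have "d u w \<noteq> 0" using dist_0[OF uV wV] assms(3) by blast
    moreover have "d s w = d w s" "d s u = d u s" using dist_sym assms(4) uV wV by blast+
    ultimately show False using assms(5) by linarith
  qed
  ultimately show ?thesis using b by simp
qed

lemma nres: assumes "resolving V E R" "E y b1" "E y b2" "b1 \<noteq> b2"
  shows "\<exists>x\<in>R. x \<in> br y b1 - {y} \<or> x \<in> br y b2 - {y}"
proof (rule ccontr)
  assume nx: "\<not> ?thesis"
  have b1V: "b1 \<in> V" and b2V: "b2 \<in> V" using g assms by blast+
  then have "\<exists>x\<in>R. d b1 x \<noteq> d b2 x" using assms(1,4) unfolding resolving_def by blast
  then obtain x where x: "x \<in> R" "d b1 x \<noteq> d b2 x" by blast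
  have xV: "x \<in> V" using x(1) assms(1) unfolding resolving_def by blast
  have "d b1 x = d b1 y + d y x"
    by (rule branch_cut[OF assms(2) branch_self[OF assms(2)]]) (use g[OF assms(2)] xV x nx in auto)
  moreover have "d b2 x = d b2 y + d y x"
    by (rule branch_cut[OF assms(3) branch_self[OF assms(3)]]) (use g[OF assms(3)] xV x nx in auto)
  moreover have "d b1 y = 1" "d b2 y = 1" using dist_edge g assms(2,3) by blast+
  ultimately show False using x(2) by simp
qed

end



lemma path_deg: assumes "is_path_or_ray E B" "x \<in> B" "{w. E x w} \<subseteq> B"
  shows "card {w. E x w} \<le> 2"
proof -
  have "\<exists>f i. {w. E x w} \<subseteq> {f (i - 1), f (Suc i)}"
    using assms(1)
  proof (cases rule: disjE[OF assms(1)[unfolded is_path_or_ray_def]])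
    case 1
    then obtain n f where f: "inj_on f {..<n}" "B = f ` {..<n}"
      "\<forall>i<n. \<forall>j<n. E (f i) (f j) \<longleftrightarrow> (i = Suc j \<or> j = Suc i)" by blast
    obtain i where i: "i < n" "x = f i" using assms(2) f(2) by blast
    have "{w. E x w} \<subseteq> {f (i - 1), f (Suc i)}"
    proof
      fix w assume w: "w \<in> {w. E x w}"
      then obtain j where j: "j < n" "w = f j" using assms(3) f(2) by blast
      then have "i = Suc j \<or> j = Suc i" using f(3) i w by auto
      then show "w \<in> {f (i - 1), f (Suc i)}" using j by auto
    qed
    then show ?thesis by blast
  next
    case 2
    then obtain f :: "nat \<Rightarrow> _" where f: "B = range f"
      "\<forall>i j. E (f i) (f j) \<longleftrightarrow> (i = Suc j \<or> j = Suc i)" by blast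
    obtain i where i: "x = f i" using assms(2) f(1) by blast
    have "{w. E x w} \<subseteq> {f (i - 1), f (Suc i)}"
    proof
      fix w assume w: "w \<in> {w. E x w}"
      then obtain j where j: "w = f j" using assms(3) f(1) by blast
      then have "i = Suc j \<or> j = Suc i" using f(2) i w by auto
      then show "w \<in> {f (i - 1), f (Suc i)}" using j by auto
    qed
    then show ?thesis by blast
  qed
  then obtain f i where s: "{w. E x w} \<subseteq> {f (i - 1), f (Suc i)}" by blast
  have "card {w. E x w} \<le> card {f (i - 1), f (Suc i)}" by (rule card_mono[OF _ s]) simp
  also have "\<dots> \<le> 2" by (simp add: card_insert_le_m1)
  finally show ?thesis .
qed

fun pseq :: "('a \<Rightarrow> 'a \<Rightarrow> bool) \<Rightarrow> 'a \<Rightarrow> 'a \<Rightarrow> nat \<Rightarrow> 'a" where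
  "pseq E r a 0 = r"
| "pseq E r a (Suc 0) = a"
| "pseq E r a (Suc (Suc n)) = (SOME z. E (pseq E r a (Suc n)) z \<and> dist E r z = Suc (Suc n))"

context tr begin

lemma pathc:
  assumes ra: "E r a"
    and NO: "\<And>y b1 b2. y \<in> br r a \<Longrightarrow> y \<noteq> r \<Longrightarrow> E y b1 \<Longrightarrow> E y b2 \<Longrightarrow>
               d r b1 = Suc (d r y) \<Longrightarrow> d r b2 = Suc (d r y) \<Longrightarrow> b1 = b2"
  shows "is_path_or_ray E (br r a)"
proof -
  define F where "F = pseq E r a"
  define H where "H = br r a"
  define A where "A k \<longleftrightarrow> (\<forall>j. 1 \<le> j \<and> j < k \<longrightarrow> (\<exists>z. E (F j) z \<and> d r z = Suc j))" for k
  have rV: "r \<in> V" using g[OF ra] by blast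
  have HV: "H \<subseteq> V" unfolding H_def using branch_V[OF ra] .
  have F0: "F 0 = r" unfolding F_def by simp
  have C: "F k \<in> H \<and> F k \<noteq> r \<and> d r (F k) = k \<and> E (F (k - 1)) (F k)" if "1 \<le> k" "A k" for k
    using that
  proof (induction k)
    case 0 then show ?case by simp
  next
    case (Suc k)
    show ?case
    proof (cases k)
      case 0
      then show ?thesis unfolding F_def H_def using branch_self[OF ra] g[OF ra] dist_edge[OF ra] ra by auto
    next
      case (Suc m)
      have Am: "A k" using Suc.prems(2) unfolding A_def by auto
      then have IH: "F k \<in> H \<and> F k \<noteq> r \<and> d r (F k) = k" using Suc.IH \<open>k = Suc m\<close> by simp
      have "\<exists>z. E (F k) z \<and> d r z = Suc k" using Suc.prems(2) \<open>k = Suc m\<close> unfolding A_def by simp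
      then have ex: "\<exists>z. E (F (Suc m)) z \<and> d r z = Suc (Suc m)" using \<open>k = Suc m\<close> by simp
      have FS: "F (Suc (Suc m)) = (SOME z. E (F (Suc m)) z \<and> d r z = Suc (Suc m))"
        unfolding F_def by simp
      have P: "E (F (Suc m)) (F (Suc (Suc m))) \<and> d r (F (Suc (Suc m))) = Suc (Suc m)"
        unfolding FS by (rule someI_ex[OF ex])
      then have nr: "F (Suc (Suc m)) \<noteq> r" by auto
      have "F (Suc (Suc m)) \<in> H"
        using branch_nb[OF ra, of "F (Suc m)" "F (Suc (Suc m))"] IH P nr \<open>k = Suc m\<close> unfolding H_def by simp
      then show ?thesis using P nr \<open>k = Suc m\<close> by simp
    qed
  qed
  have dF: "d r (F k) = k" if "A k" for k
  proof (cases k)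
    case 0 then show ?thesis using F0 by simp
  next
    case (Suc m) then show ?thesis using C[of k] that by simp
  qed
  have FH: "F k \<in> H" if "A k" for k
  proof (cases k)
    case 0 then show ?thesis using F0 unfolding H_def by (simp add: branch_v)
  next
    case (Suc m) then show ?thesis using C[of k] that by simp
  qed
  have SURJ: "A (d r x) \<and> F (d r x) = x" if "x \<in> H" for x
  proof -
    have "\<And>x. x \<in> H \<Longrightarrow> d r x = k \<Longrightarrow> A (d r x) \<and> F (d r x) = x" for k
    proof (induction k rule: less_induct)
      case (less k x)
      show ?case
      proof (cases "x = r")
        case True then show ?thesis using F0 unfolding A_def by simp
      next
        case False
        have xV: "x \<in> V" using less.prems HV by blast
        obtain p where p: "E x p" "r \<in> br x p" "d x r = Suc (d p r)"
          using toward[OF xV rV] False by metis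
        have pV: "p \<in> V" using g[OF p(1)] by blast
        have dx: "d r x = Suc (d r p)" using p(3) dist_sym xV pV rV by simp
        show ?thesis
        proof (cases "p = r")
          case True
          then have "E r x" using g[OF p(1)] by simp
          then have "x = a" using branch_unique[OF _ ra branch_self[of r x]] less.prems(1) False
            unfolding H_def by blast
          moreover have "d r x = 1" using dx True by simp
          ultimately show ?thesis unfolding A_def F_def by simp
        next
          case pr: False
          have pH: "p \<in> H" using branch_nb[OF ra, of x p] less.prems(1) False p(1) pr unfolding H_def by blast
          have "d r p < k" using dx less.prems(2) by simp
          then have IH: "A (d r p) \<and> F (d r p) = p" using less.IH pH by blast
          define m where "m = d r p"
          have m1: "m \<noteq> 0" using dist_0[OF rV pV] pr unfolding m_def by metis
          then obtain m' where m': "m = Suc m'" by (cases m) auto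
          have Epx: "E (F m) x" using IH g[OF p(1)] unfolding m_def by simp
          have dxm: "d r x = Suc m" using dx unfolding m_def by simp
          have A2: "A (Suc m)" using IH Epx dxm unfolding A_def m_def
            by (metis less_Suc_eq)
          have ex: "\<exists>z. E (F (Suc m')) z \<and> d r z = Suc (Suc m')" using Epx dxm m' by auto
          have FS: "F (Suc (Suc m')) = (SOME z. E (F (Suc m')) z \<and> d r z = Suc (Suc m'))"
            unfolding F_def by simp
          have P: "E (F (Suc m')) (F (Suc (Suc m'))) \<and> d r (F (Suc (Suc m'))) = Suc (Suc m')"
            unfolding FS by (rule someI_ex[OF ex])
          have Fm: "F m = p" using IH unfolding m_def by simp
          have "F (Suc m) = x"
            using NO[of p "F (Suc m)" x] P Epx dxm Fm m' pH pr unfolding H_def m_def by simp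
          then show ?thesis using A2 dxm by simp
        qed
      qed
    qed
    then show ?thesis using that by blast
  qed
  have EDG: "E (F i) (F j) \<longleftrightarrow> (i = Suc j \<or> j = Suc i)" if "A i" "A j" for i j
  proof
    assume e: "E (F i) (F j)"
    have ij: "F i \<noteq> F j" "F i \<in> V" "F j \<in> V" using g[OF e] by auto
    then have "i \<noteq> j" by auto
    have "d r (F i) \<le> d r (F j) + d (F j) (F i)" using dist_tri[OF rV ij(3,2)] .
    moreover have "d r (F j) \<le> d r (F i) + d (F i) (F j)" using dist_tri[OF rV ij(2,3)] .
    moreover have "d (F i) (F j) = 1" "d (F j) (F i) = 1" using dist_edge e g[OF e] by auto
    ultimately show "i = Suc j \<or> j = Suc i" using dF that \<open>i \<noteq> j\<close> by fastforce
  next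
    assume "i = Suc j \<or> j = Suc i"
    then show "E (F i) (F j)"
    proof
      assume "i = Suc j" then show ?thesis using C[of i] that g by auto
    next
      assume "j = Suc i" then show ?thesis using C[of j] that by auto
    qed
  qed
  show ?thesis
  proof (cases "\<forall>j. 1 \<le> j \<longrightarrow> (\<exists>z. E (F j) z \<and> d r z = Suc j)")
    case True
    then have AA: "A k" for k unfolding A_def by blast
    have "inj F" by (rule injI) (metis AA dF)
    moreover have "H = range F"
    proof
      show "range F \<subseteq> H" using FH AA by auto
      show "H \<subseteq> range F"
      proof
        fix x assume "x \<in> H"
        then have "F (d r x) = x" using SURJ by blast
        then show "x \<in> range F" by (metis rangeI)
      qed
    qed
    ultimately show ?thesis unfolding is_path_or_ray_def H_def[symmetric] using EDG AA F_def
      by blast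
  next
    case False
    define L where "L = (LEAST j. 1 \<le> j \<and> \<not> (\<exists>z. E (F j) z \<and> d r z = Suc j))"
    have L: "1 \<le> L \<and> \<not> (\<exists>z. E (F L) z \<and> d r z = Suc L)"
    proof -
      obtain j0 where "1 \<le> j0 \<and> \<not> (\<exists>z. E (F j0) z \<and> d r z = Suc j0)" using False by blast
      then show ?thesis unfolding L_def by (rule LeastI)
    qed
    have AL: "A k" if "k \<le> L" for k
      unfolding A_def
    proof (intro allI impI)
      fix j assume "1 \<le> j \<and> j < k"
      then have "j < L" using that by simp
      then show "\<exists>z. E (F j) z \<and> d r z = Suc j" using not_less_Least[of j] \<open>1 \<le> j \<and> j < k\<close>
        unfolding L_def by blast
    qed
    have "inj_on F {..<Suc L}"
      by (rule inj_onI) (metis AL dF lessThan_iff less_Suc_eq_le)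
    moreover have "H = F ` {..<Suc L}"
    proof
      show "F ` {..<Suc L} \<subseteq> H" using FH AL by auto
    next
      show "H \<subseteq> F ` {..<Suc L}"
      proof
        fix x assume x: "x \<in> H"
        have s: "A (d r x) \<and> F (d r x) = x" using SURJ[OF x] .
        have "d r x \<le> L"
        proof (rule ccontr)
          assume "\<not> d r x \<le> L"
          then have "1 \<le> L \<and> L < d r x" using L by simp
          then show False using s L unfolding A_def by blast
        qed
        then show "x \<in> F ` {..<Suc L}" using s by (metis image_eqI lessThan_iff less_Suc_eq_le)
      qed
    qed
    moreover have "\<forall>i<Suc L. \<forall>j<Suc L. E (F i) (F j) \<longleftrightarrow> (i = Suc j \<or> j = Suc i)"
      using EDG AL by simp
    ultimately show ?thesis unfolding is_path_or_ray_def H_def[symmetric] by blast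
  qed
qed

end



context tr begin

abbreviation path where "path \<equiv> is_path_or_ray E"

lemma away_notin: assumes "E r a" "y \<in> br r a" "y \<noteq> r" "E y b" "d r b = Suc (d r y)"
  shows "r \<notin> br y b"
proof
  assume rb: "r \<in> br y b"
  have rV: "r \<in> V" "y \<in> V" "b \<in> V" using g assms(1,4) by auto
  have "d y r = Suc (d b r)" using branch_dist[OF assms(4) rb] assms(3) by simp
  then have "d r y = Suc (d r b)" using dist_sym rV by simp
  then show False using assms(5) by simp
qed

lemma nonpath_y: assumes ra: "E r a" and np: "\<not> path (br r a)"
  shows "\<exists>y b1 b2. y \<in> br r a \<and> y \<noteq> r \<and> E y b1 \<and> E y b2 \<and> b1 \<noteq> b2 \<and>
     br y b1 \<subseteq> br r a - {r} \<and> br y b2 \<subseteq> br r a - {r}"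
proof -
  obtain y b1 b2 where y: "y \<in> br r a" "y \<noteq> r" "E y b1" "E y b2" "d r b1 = Suc (d r y)"
    "d r b2 = Suc (d r y)" "b1 \<noteq> b2"
    using pathc[OF ra] np by blast
  have "r \<notin> br y b1" "r \<notin> br y b2" using away_notin[OF ra y(1,2)] y by auto
  then have "br y b1 \<subseteq> br r a - {r}" "br y b2 \<subseteq> br r a - {r}"
    using branch_sub[OF ra y(1,2)] y(3,4) by auto
  then show ?thesis using y by blast
qed

lemma ext_n:
  assumes R: "resolving V E R"
  shows "E r a \<Longrightarrow> \<not> path (br r a) \<Longrightarrow> (\<forall>x\<in>R. x \<in> br r a - {r} \<longrightarrow> d r x < n) \<Longrightarrow>
    \<exists>y b1 b2. E y b1 \<and> E y b2 \<and> b1 \<noteq> b2 \<and> br y b1 \<subseteq> br r a - {r} \<and> br y b2 \<subseteq> br r a - {r}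
       \<and> path (br y b1) \<and> path (br y b2)"
proof (induction n arbitrary: r a)
  case 0
  obtain y b1 b2 where y: "y \<in> br r a" "y \<noteq> r" "E y b1" "E y b2" "b1 \<noteq> b2"
     "br y b1 \<subseteq> br r a - {r}" "br y b2 \<subseteq> br r a - {r}" using nonpath_y[OF 0(1,2)] by blast
  obtain x where "x \<in> R" "x \<in> br y b1 - {y} \<or> x \<in> br y b2 - {y}" using nres[OF R y(3,4,5)] by blast
  then show ?case using 0(3) y(6,7) by blast
next
  case (Suc n)
  obtain y b1 b2 where y: "y \<in> br r a" "y \<noteq> r" "E y b1" "E y b2" "b1 \<noteq> b2"
     "br y b1 \<subseteq> br r a - {r}" "br y b2 \<subseteq> br r a - {r}" using nonpath_y[OF Suc(2,3)] by blast
  have rV: "r \<in> V" using g[OF Suc(2)] by blast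
  have yV: "y \<in> V" using g[OF y(3)] by blast
  have rec: "\<exists>y b1 b2. E y b1 \<and> E y b2 \<and> b1 \<noteq> b2 \<and> br y b1 \<subseteq> br r a - {r} \<and> br y b2 \<subseteq> br r a - {r}
       \<and> path (br y b1) \<and> path (br y b2)"
    if b: "E y b" "br y b \<subseteq> br r a - {r}" "\<not> path (br y b)" for b
  proof -
    have "\<forall>x\<in>R. x \<in> br y b - {y} \<longrightarrow> d y x < n"
    proof (intro ballI impI)
      fix x assume x: "x \<in> R" "x \<in> br y b - {y}"
      have xV: "x \<in> V" using x(1) R unfolding resolving_def by blast
      have "x \<in> br r a - {r}" using x b(2) by blast
      then have "d r x < Suc n" using Suc(4) x(1) by blast
      moreover have "d x r = d x y + d y r"
        using branch_cut[OF b(1), of x r] x(2) rV b(2) by blast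
      moreover have "d y r \<noteq> 0" using dist_0[OF yV rV] y(2) by blast
      moreover have "d x r = d r x" "d x y = d y x" using dist_sym xV rV yV by auto
      ultimately show "d y x < n" by linarith
    qed
    from Suc.IH[OF b(1) b(3) this] obtain y' c1 c2 where
      "E y' c1 \<and> E y' c2 \<and> c1 \<noteq> c2 \<and> br y' c1 \<subseteq> br y b - {y} \<and> br y' c2 \<subseteq> br y b - {y}
       \<and> path (br y' c1) \<and> path (br y' c2)" by blast
    then show ?thesis using b(2) by blast
  qed
  show ?case
  proof (cases "path (br y b1) \<and> path (br y b2)")
    case True then show ?thesis using y by blast
  next
    case False
    then show ?thesis using rec y by blast
  qed
qed

lemma ext:
  assumes R: "resolving V E R" "finite R" and ra: "E r a" and np: "\<not> path (br r a)"
  shows "\<exists>y b1 b2. E y b1 \<and> E y b2 \<and> b1 \<noteq> b2 \<and> br y b1 \<subseteq> br r a - {r} \<and> br y b2 \<subseteq> br r a - {r}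
       \<and> path (br y b1) \<and> path (br y b2)"
proof -
  have "\<forall>x\<in>R. x \<in> br r a - {r} \<longrightarrow> d r x < Suc (Max (insert 0 (d r ` R)))"
    using R(2) by (simp add: le_imp_less_Suc)
  then show ?thesis using ext_n[OF R(1) ra np] by blast
qed

end

locale trlf = tr +
  assumes lf: "locally_finite V E"
begin

abbreviation bp where "bp \<equiv> branch_paths V E"
abbreviation PT where "PT \<equiv> P_T V E"

lemma nbr_finite: "finite {w. E v w}"
proof (cases "v \<in> V")
  case True then show ?thesis using lf unfolding locally_finite_def by blast
next
  case False then have "{w. E v w} = {}" using g by blast
  then show ?thesis by simp
qed

lemma branches_eq: "branches V E v = br v ` {w. E v w}"
  unfolding branches_def by auto

lemma branches_finite: "finite (branches V E v)"
  unfolding branches_eq using nbr_finite by simp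

lemma bp_sub: "bp v \<subseteq> branches V E v" unfolding branch_paths_def by auto

lemma bp_finite: "finite (bp v)" using finite_subset[OF bp_sub branches_finite] .

lemma bp_mem: "B \<in> bp v \<longleftrightarrow> (\<exists>a. E v a \<and> B = br v a) \<and> path B"
  unfolding branch_paths_def branches_def by auto

lemma br_inj: assumes "E v a" "E v b" "br v a = br v b" shows "a = b"
proof -
  have "a \<in> br v b" using branch_self[OF assms(1)] assms(3) by simp
  then show ?thesis using branch_unique[OF assms(1,2) branch_self[OF assms(1)]] g[OF assms(1)] by auto
qed

lemma card_branches: "card (branches V E v) = deg E v"
proof -
  have "inj_on (br v) {w. E v w}" by (rule inj_onI) (use br_inj in auto)
  then show ?thesis unfolding branches_eq deg_def by (simp add: card_image)
qed

lemma deg_in_path: assumes "E v a" "path (br v a)" "x \<in> br v a" "x \<noteq> v"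
  shows "deg E x \<le> 2"
  unfolding deg_def using path_deg[OF assms(2,3) branch_nbs[OF assms(1,3,4)]] .

lemma PT_le_deg: "PT v \<le> deg E v"
  unfolding P_T_def using card_mono[OF branches_finite bp_sub] card_branches by simp

lemma PT2: assumes "2 \<le> PT v" and ex3: "\<exists>u\<in>V. 3 \<le> deg E u" shows "v \<in> V" "3 \<le> deg E v"
proof -
  have "bp v \<noteq> {}" using assms(1) unfolding P_T_def by auto
  then obtain B where "B \<in> bp v" by blast
  then obtain a where a: "E v a" using bp_mem by blast
  then show vV: "v \<in> V" using g by blast
  show "3 \<le> deg E v"
  proof (rule ccontr)
    assume "\<not> 3 \<le> deg E v"
    then have dle: "deg E v \<le> 2" by simp
    have "card (bp v) \<le> card (branches V E v)" using card_mono[OF branches_finite bp_sub] .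
    then have "card (bp v) = card (branches V E v)"
      using assms(1) dle card_branches unfolding P_T_def by simp
    then have beq: "bp v = branches V E v" using card_subset_eq[OF branches_finite bp_sub] by simp
    have allp: "path (br v w)" if "E v w" for w
      using beq that bp_mem[of "br v w" v] unfolding branches_eq by blast
    have "deg E u \<le> 2" if uV: "u \<in> V" for u
    proof (cases "u = v")
      case True then show ?thesis using dle by simp
    next
      case False
      then obtain p where "E v p" "u \<in> br v p" using toward[OF vV uV] by blast
      then show ?thesis using deg_in_path allp False by blast
    qed
    then show False using ex3 by fastforce
  qed
qed

definition X where "X v = (\<Union>B\<in>bp v. B - {v})"

lemma X_mem: "x \<in> X v \<longleftrightarrow> (\<exists>a. E v a \<and> path (br v a) \<and> x \<in> br v a \<and> x \<noteq> v)"
  unfolding X_def using bp_mem by auto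

lemma X_V: "X v \<subseteq> V"
  unfolding X_def using bp_mem branch_V by blast

lemma X_disj: assumes "3 \<le> deg E v" "3 \<le> deg E v'" "v \<noteq> v'" shows "X v \<inter> X v' = {}"
proof (rule ccontr)
  assume "X v \<inter> X v' \<noteq> {}"
  then obtain x where "x \<in> X v" "x \<in> X v'" by blast
  then obtain a a' where a: "E v a" "path (br v a)" "x \<in> br v a" "x \<noteq> v"
    and a': "E v' a'" "path (br v' a')" "x \<in> br v' a'" "x \<noteq> v'" unfolding X_mem by blast
  have vV: "v \<in> V" "v' \<in> V" "x \<in> V" using g a a' branch_V by blast+
  have "v' \<notin> br v a - {v}" using deg_in_path[OF a(1,2)] assms(2) by fastforce
  then have 1: "d x v' = d x v + d v v'" using branch_cut[OF a(1,3,4) vV(2)] by blast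
  have "v \<notin> br v' a' - {v'}" using deg_in_path[OF a'(1,2)] assms(1) by fastforce
  then have 2: "d x v = d x v' + d v' v" using branch_cut[OF a'(1,3,4) vV(1)] by blast
  have "d v v' = 0" using 1 2 dist_sym vV by simp
  then show False using dist_0 vV assms(3) by blast
qed

end



context tr begin

lemma unres:
  assumes SV: "S \<subseteq> V" and Sne: "S \<noteq> {}"
  shows "u \<in> V \<Longrightarrow> w \<in> V \<Longrightarrow> u \<noteq> w \<Longrightarrow> (\<forall>s\<in>S. d u s = d w s) \<Longrightarrow>
    \<exists>m a b. E m a \<and> E m b \<and> a \<noteq> b \<and> S \<inter> (br m a - {m}) = {} \<and> S \<inter> (br m b - {m}) = {}"
proof (induction "d u w" arbitrary: u w rule: less_induct)
  case less
  note uV = less.prems(1) and wV = less.prems(2) and uw = less.prems(3) and eq = less.prems(4)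
  obtain p where p: "E u p" "w \<in> br u p" "d u w = Suc (d p w)" using toward[OF uV wV] uw by metis
  have pV: "p \<in> V" using g[OF p(1)] by blast
  have sp: "d u s = Suc (d p s)" if "s \<in> S" for s
  proof -
    have "s \<in> br u p \<and> s \<noteq> u" using toward_all[OF p(1,2) uw[symmetric]] SV that eq by blast
    then show ?thesis using branch_dist[OF p(1)] by blast
  qed
  consider "d p w = 0" | "d p w = 1" | "2 \<le> d p w" by linarith
  then show ?case
  proof cases
    case 1
    then have "p = w" using dist_0 pV wV by blast
    obtain s where "s \<in> S" using Sne by blast
    then show ?thesis using sp eq \<open>p = w\<close> by fastforce
  next
    case 2
    then have Epw: "E p w" using dist_1 pV wV by blast
    have Epu: "E p u" using g[OF p(1)] by blast
    have "S \<inter> (br p u - {p}) = {}"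
    proof (rule ccontr)
      assume "S \<inter> (br p u - {p}) \<noteq> {}"
      then obtain s where s: "s \<in> S" "s \<in> br p u" "s \<noteq> p" by blast
      have "d p s = Suc (d u s)" using branch_dist[OF Epu s(2,3)] .
      then show False using sp[OF s(1)] by simp
    qed
    moreover have "S \<inter> (br p w - {p}) = {}"
    proof (rule ccontr)
      assume "S \<inter> (br p w - {p}) \<noteq> {}"
      then obtain s where s: "s \<in> S" "s \<in> br p w" "s \<noteq> p" by blast
      have "d p s = Suc (d w s)" using branch_dist[OF Epw s(2,3)] .
      then show False using sp[OF s(1)] eq s(1) by simp
    qed
    ultimately show ?thesis using Epw Epu uw by blast
  next
    case 3
    obtain q where q: "E w q" "u \<in> br w q" "d w u = Suc (d q u)" using toward[OF wV uV] uw by metis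
    have qV: "q \<in> V" using g[OF q(1)] by blast
    have sq: "d w s = Suc (d q s)" if "s \<in> S" for s
    proof -
      have "s \<in> br w q \<and> s \<noteq> w" using toward_all[OF q(1,2) uw] SV that eq by force
      then show ?thesis using branch_dist[OF q(1)] by blast
    qed
    have dwu: "d w u = d u w" using dist_sym uV wV by simp
    have "q \<noteq> u"
    proof
      assume "q = u"
      then have "d w u = 1" using dist_edge[OF q(1)] by simp
      then show False using dwu p(3) 3 by simp
    qed
    have qb: "q \<in> br u p" using branch_nb[OF p(1,2) uw[symmetric] q(1) \<open>q \<noteq> u\<close>] .
    have duq: "d u q = Suc (d p q)" using branch_dist[OF p(1) qb \<open>q \<noteq> u\<close>] .
    have "d u q = d q u" using dist_sym uV qV by simp
    then have lt: "d p q < d u w" using duq q(3) dwu by simp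
    have "p \<noteq> q"
    proof
      assume "p = q"
      then have "d q u = 1" using dist_edge[OF p(1)] dist_sym uV pV by simp
      then show False using q(3) dwu p(3) 3 by simp
    qed
    moreover have "\<forall>s\<in>S. d p s = d q s" using sp sq eq by fastforce
    ultimately show ?thesis using less.hyps[OF lt pV qV] by blast
  qed
qed

end

locale mn = trlf +
  assumes ex3: "\<exists>u\<in>V. 3 \<le> deg E u"
    and R0: "\<exists>R. finite R \<and> resolving V E R"
begin

definition M where "M = {v \<in> V. 2 \<le> PT v}"

lemma M_deg: "v \<in> M \<Longrightarrow> 3 \<le> deg E v"
  unfolding M_def using PT2 ex3 by blast

lemma M_disj: "v \<in> M \<Longrightarrow> v' \<in> M \<Longrightarrow> v \<noteq> v' \<Longrightarrow> X v \<inter> X v' = {}"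
  using X_disj M_deg by blast

definition gg where "gg v x = (SOME B. B \<in> bp v \<and> x \<in> B - {v})"

lemma gg: "x \<in> X v \<Longrightarrow> gg v x \<in> bp v \<and> x \<in> gg v x - {v}"
  unfolding gg_def X_def by (rule someI_ex) blast

lemma bp_same: assumes "B \<in> bp v" "B' \<in> bp v" "x \<in> B - {v}" "x \<in> B' - {v}" shows "B = B'"
proof -
  obtain a a' where "E v a" "B = br v a" "E v a'" "B' = br v a'" using assms(1,2) bp_mem by metis
  then show ?thesis using branch_unique assms(3,4) by blast
qed

lemma bp_two: assumes "B1 \<in> bp v" "B2 \<in> bp v" "B1 \<noteq> B2"
  obtains a1 a2 where "E v a1" "E v a2" "a1 \<noteq> a2" "B1 = br v a1" "B2 = br v a2"
  using assms bp_mem by metis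

lemma lower_v:
  assumes R: "resolving V E R" "finite R" and vM: "v \<in> M"
  shows "PT v - 1 \<le> card (gg v ` (R \<inter> X v))" "gg v ` (R \<inter> X v) \<subseteq> bp v"
proof -
  define hit where "hit = {B \<in> bp v. R \<inter> (B - {v}) \<noteq> {}}"
  have "hit \<subseteq> gg v ` (R \<inter> X v)"
  proof
    fix B assume "B \<in> hit"
    then obtain x where x: "B \<in> bp v" "x \<in> R" "x \<in> B - {v}" unfolding hit_def by blast
    then have xX: "x \<in> X v" unfolding X_def by blast
    then have "gg v x = B" using gg[OF xX] bp_same x by blast
    then show "B \<in> gg v ` (R \<inter> X v)" using xX x(2) by blast
  qed
  then have c1: "card hit \<le> card (gg v ` (R \<inter> X v))" using R(2) by (intro card_mono) auto
  have "card (bp v - hit) \<le> Suc 0"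
  proof (subst card_le_Suc0_iff_eq)
    show "finite (bp v - hit)" using bp_finite by simp
    show "\<forall>B1\<in>bp v - hit. \<forall>B2\<in>bp v - hit. B1 = B2"
    proof (intro ballI, rule ccontr)
      fix B1 B2 assume B: "B1 \<in> bp v - hit" "B2 \<in> bp v - hit" "B1 \<noteq> B2"
      have B': "B1 \<in> bp v" "B2 \<in> bp v" "B1 \<noteq> B2" using B by auto
      obtain a1 a2 where a: "E v a1" "E v a2" "a1 \<noteq> a2" "B1 = br v a1" "B2 = br v a2"
        by (rule bp_two[OF B'])
      obtain x where "x \<in> R" "x \<in> br v a1 - {v} \<or> x \<in> br v a2 - {v}" using nres[OF R(1) a(1,2,3)] by blast
      then show False using B a unfolding hit_def by blast
    qed
  qed
  moreover have "card (bp v) = card hit + card (bp v - hit)"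
    using card_Diff_subset[of hit "bp v"] bp_finite card_mono[of "bp v" hit]
    unfolding hit_def by fastforce
  ultimately have "PT v - 1 \<le> card hit" unfolding P_T_def by simp
  then show "PT v - 1 \<le> card (gg v ` (R \<inter> X v))" using c1 by simp
  show "gg v ` (R \<inter> X v) \<subseteq> bp v" using gg by blast
qed

lemma lower_v2: assumes "resolving V E R" "finite R" "v \<in> M" shows "PT v - 1 \<le> card (R \<inter> X v)"
  using lower_v[OF assms] card_image_le[of "R \<inter> X v" "gg v"] assms(2) by simp

lemma M_finite: "finite M"
proof -
  obtain R where R: "finite R" "resolving V E R" using R0 by blast
  have ne: "R \<inter> X v \<noteq> {}" if "v \<in> M" for v
  proof -
    have "2 \<le> PT v" using that unfolding M_def by simp
    then have "1 \<le> PT v - 1" by arith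
    then show ?thesis using lower_v2[OF R(2,1) that] by auto
  qed
  define h where "h v = (SOME x. x \<in> R \<inter> X v)" for v
  have h: "h v \<in> R \<inter> X v" if "v \<in> M" for v using ne[OF that] unfolding h_def by (metis (mono_tags) ex_in_conv someI_ex)
  have "inj_on h M"
  proof (rule inj_onI)
    fix v v' assume "v \<in> M" "v' \<in> M" "h v = h v'"
    then have "h v \<in> X v \<inter> X v'" using h[OF \<open>v \<in> M\<close>] h[OF \<open>v' \<in> M\<close>] by auto
    then show "v = v'" using M_disj[OF \<open>v \<in> M\<close> \<open>v' \<in> M\<close>] by blast
  qed
  moreover have "h ` M \<subseteq> R" using h by blast
  ultimately show ?thesis using inj_on_finite R(1) by auto
qed

definition \<sigma> where "\<sigma> = (\<Sum>v\<in>M. PT v - 1)"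

lemma lower: assumes "resolving V E R" "finite R" shows "\<sigma> \<le> card R"
proof -
  have "\<sigma> \<le> (\<Sum>v\<in>M. card (R \<inter> X v))" unfolding \<sigma>_def
    by (rule sum_mono) (rule lower_v2[OF assms])
  also have "\<dots> = card (\<Union>v\<in>M. R \<inter> X v)"
    by (rule card_UN_disjoint[symmetric]) (use M_finite assms(2) M_disj in auto)
  also have "\<dots> \<le> card R" by (rule card_mono[OF assms(2)]) auto
  finally show ?thesis .
qed

definition choice where "choice c \<longleftrightarrow> (\<forall>v\<in>M. finite (c v) \<and> card (c v) = PT v - 1 \<and> v \<notin> c v \<and>
      (\<exists>g. inj_on g (c v) \<and> (\<forall>x\<in>c v. g x \<in> bp v \<and> x \<in> g x)))"

lemma choice_X: "choice c \<Longrightarrow> v \<in> M \<Longrightarrow> c v \<subseteq> X v"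
  unfolding choice_def X_def by blast

lemma cover: assumes c: "choice c" and vM: "v \<in> M" and B: "B1 \<in> bp v" "B2 \<in> bp v" "B1 \<noteq> B2"
  shows "\<exists>x\<in>c v. x \<in> B1 - {v} \<or> x \<in> B2 - {v}"
proof (rule ccontr)
  assume nx: "\<not> ?thesis"
  obtain gf where gf: "inj_on gf (c v)" "\<forall>x\<in>c v. gf x \<in> bp v \<and> x \<in> gf x" and cv: "finite (c v)"
    "card (c v) = PT v - 1" "v \<notin> c v" using c vM unfolding choice_def by blast
  have "gf ` (c v) \<subseteq> bp v - {B1, B2}"
  proof
    fix B assume "B \<in> gf ` c v"
    then obtain x where x: "x \<in> c v" "B = gf x" by blast
    then have "x \<in> B" "B \<in> bp v" "x \<noteq> v" using gf cv(3) by auto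
    then show "B \<in> bp v - {B1, B2}" using nx x by blast
  qed
  then have "card (gf ` (c v)) \<le> card (bp v - {B1, B2})" using bp_finite by (intro card_mono) auto
  also have "\<dots> = PT v - 2" unfolding P_T_def using B bp_finite by (simp add: card_Diff_subset)
  finally have "PT v - 1 \<le> PT v - 2" using card_image[OF gf(1)] cv(2) by simp
  moreover have "2 \<le> PT v" using vM unfolding M_def by simp
  ultimately show False by simp
qed

lemma free_path:
  assumes c: "choice c" and ra: "E r a" and fr: "(\<Union>v\<in>M. c v) \<inter> (br r a - {r}) = {}"
  shows "path (br r a)"
proof (rule ccontr)
  assume np: "\<not> path (br r a)"
  obtain R where R: "finite R" "resolving V E R" using R0 by blast
  obtain y b1 b2 where y: "E y b1" "E y b2" "b1 \<noteq> b2" "br y b1 \<subseteq> br r a - {r}" "br y b2 \<subseteq> br r a - {r}"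
    "path (br y b1)" "path (br y b2)" using ext[OF R(2,1) ra np] by blast
  have B: "br y b1 \<in> bp y" "br y b2 \<in> bp y" using y bp_mem by blast+
  have ne: "br y b1 \<noteq> br y b2" using br_inj y by blast
  have "2 \<le> PT y"
  proof -
    have "{br y b1, br y b2} \<subseteq> bp y" using B by blast
    then have "card {br y b1, br y b2} \<le> PT y" unfolding P_T_def using bp_finite card_mono by blast
    then show ?thesis using ne by simp
  qed
  then have yM: "y \<in> M" unfolding M_def using g[OF y(1)] by blast
  obtain x where "x \<in> c y" "x \<in> br y b1 - {y} \<or> x \<in> br y b2 - {y}" using cover[OF c yM B ne] by blast
  then show False using fr y(4,5) yM by blast
qed

lemma M_ne: "M \<noteq> {}"
proof -
  obtain R where R: "finite R" "resolving V E R" using R0 by blast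
  obtain u where u: "u \<in> V" "3 \<le> deg E u" using ex3 by blast
  show ?thesis
  proof (cases "\<forall>w. E u w \<longrightarrow> path (br u w)")
    case True
    then have "bp u = branches V E u" unfolding branches_eq using bp_mem bp_sub branches_eq by blast
    then have "PT u = deg E u" unfolding P_T_def using card_branches by simp
    then show ?thesis using u unfolding M_def by auto
  next
    case False
    then obtain w where w: "E u w" "\<not> path (br u w)" by blast
    obtain y b1 b2 where y: "E y b1" "E y b2" "b1 \<noteq> b2" "path (br y b1)" "path (br y b2)"
      using ext[OF R(2,1) w] by blast
    have B: "br y b1 \<in> bp y" "br y b2 \<in> bp y" using y bp_mem by blast+
    have ne: "br y b1 \<noteq> br y b2" using br_inj y by blast
    have "{br y b1, br y b2} \<subseteq> bp y" using B by blast
    then have "card {br y b1, br y b2} \<le> PT y" unfolding P_T_def using bp_finite card_mono by blast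
    then have "2 \<le> PT y" using ne by simp
    then show ?thesis unfolding M_def using g[OF y(1)] by blast
  qed
qed

lemma suff: assumes c: "choice c" shows "resolving V E (\<Union>v\<in>M. c v)"
proof -
  define S where "S = (\<Union>v\<in>M. c v)"
  have SV: "S \<subseteq> V" unfolding S_def using choice_X[OF c] X_V by blast
  have Sne: "S \<noteq> {}"
  proof -
    obtain v where vM: "v \<in> M" using M_ne by blast
    then have "card (c v) \<noteq> 0" using c unfolding choice_def M_def by auto
    then have "c v \<noteq> {}" by auto
    then show ?thesis unfolding S_def using vM by blast
  qed
  have "\<exists>x\<in>S. d u x \<noteq> d w x" if uw: "u \<in> V" "w \<in> V" "u \<noteq> w" for u w
  proof (rule ccontr)
    assume "\<not> ?thesis"
    then have "\<forall>s\<in>S. d u s = d w s" by blast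
    from unres[OF SV Sne uw this] obtain m a b where
      m: "E m a" "E m b" "a \<noteq> b" "S \<inter> (br m a - {m}) = {}" "S \<inter> (br m b - {m}) = {}" by blast
    have pa: "path (br m a)" "path (br m b)" using free_path[OF c] m unfolding S_def by blast+
    have B: "br m a \<in> bp m" "br m b \<in> bp m" using pa m bp_mem by blast+
    have ne: "br m a \<noteq> br m b" using br_inj m by blast
    have "{br m a, br m b} \<subseteq> bp m" using B by blast
    then have "card {br m a, br m b} \<le> PT m" unfolding P_T_def using bp_finite card_mono by blast
    then have "2 \<le> PT m" using ne by simp
    then have mM: "m \<in> M" unfolding M_def using g[OF m(1)] by blast
    obtain x where "x \<in> c m" "x \<in> br m a - {m} \<or> x \<in> br m b - {m}" using cover[OF c mM B ne] by blast
    then show False using m(4,5) mM unfolding S_def by blast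
  qed
  then show ?thesis unfolding resolving_def S_def[symmetric] using SV by blast
qed

lemma choice_card: assumes c: "choice c" shows "finite (\<Union>v\<in>M. c v)" "card (\<Union>v\<in>M. c v) = \<sigma>"
proof -
  have fin: "\<forall>v\<in>M. finite (c v)" using c unfolding choice_def by blast
  then show "finite (\<Union>v\<in>M. c v)" using M_finite by blast
  have disj: "\<forall>v\<in>M. \<forall>v'\<in>M. v \<noteq> v' \<longrightarrow> c v \<inter> c v' = {}"
    using M_disj choice_X[OF c] by blast
  have "card (\<Union>v\<in>M. c v) = (\<Sum>v\<in>M. card (c v))" using card_UN_disjoint[OF M_finite fin disj] .
  also have "\<dots> = \<sigma>" unfolding \<sigma>_def using c unfolding choice_def by (intro sum.cong) auto
  finally show "card (\<Union>v\<in>M. c v) = \<sigma>" .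
qed

lemma choice_ex: "\<exists>c. choice c"
proof -
  have "\<exists>C. finite C \<and> card C = PT v - 1 \<and> v \<notin> C \<and>
      (\<exists>gf. inj_on gf C \<and> (\<forall>x\<in>C. gf x \<in> bp v \<and> x \<in> gf x))" if "v \<in> M" for v
  proof -
    define N where "N = {a. E v a \<and> path (br v a)}"
    have Nf: "finite N" unfolding N_def using nbr_finite by (rule rev_finite_subset) auto
    have "bp v = br v ` N"
    proof
      show "bp v \<subseteq> br v ` N"
      proof
        fix B assume "B \<in> bp v"
        then obtain a where "E v a" "B = br v a" "path B" using bp_mem by blast
        then show "B \<in> br v ` N" unfolding N_def by blast
      qed
      show "br v ` N \<subseteq> bp v" unfolding N_def using bp_mem by blast
    qed
    moreover have "inj_on (br v) N" unfolding N_def by (rule inj_onI) (use br_inj in blast)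
    ultimately have cN: "card N = PT v" unfolding P_T_def by (simp add: card_image)
    obtain C where C: "C \<subseteq> N" "card C = PT v - 1" using obtain_subset_with_card_n[of "PT v - 1" N] cN by auto
    have "finite C" using C(1) Nf finite_subset by blast
    moreover have "v \<notin> C" using C(1) g unfolding N_def by blast
    moreover have "inj_on (br v) C" using C(1) br_inj unfolding N_def by (intro inj_onI) blast
    moreover have "\<forall>x\<in>C. br v x \<in> bp v \<and> x \<in> br v x" using C(1) bp_mem branch_self unfolding N_def by blast
    ultimately show ?thesis using C(2) by blast
  qed
  then have "\<forall>v\<in>M. \<exists>C. finite C \<and> card C = PT v - 1 \<and> v \<notin> C \<and>
      (\<exists>gf. inj_on gf C \<and> (\<forall>x\<in>C. gf x \<in> bp v \<and> x \<in> gf x))" by blast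
  then have "\<exists>c. \<forall>v\<in>M. finite (c v) \<and> card (c v) = PT v - 1 \<and> v \<notin> c v \<and>
      (\<exists>gf. inj_on gf (c v) \<and> (\<forall>x\<in>c v. gf x \<in> bp v \<and> x \<in> gf x))" by (rule bchoice)
  then show ?thesis unfolding choice_def .
qed

end



context mn begin

lemma basis_choice: assumes S: "finite S" "resolving V E S" "card S = \<sigma>"
  shows "\<exists>c. choice c \<and> S = (\<Union>v\<in>M. c v)"
proof -
  define c where "c v = S \<inter> X v" for v
  have a1: "\<sigma> \<le> (\<Sum>v\<in>M. card (c v))" unfolding \<sigma>_def c_def
    by (rule sum_mono) (rule lower_v2[OF S(2,1)])
  have a2: "(\<Sum>v\<in>M. card (c v)) = card (\<Union>v\<in>M. c v)" unfolding c_def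
    by (rule card_UN_disjoint[symmetric]) (use M_finite S(1) M_disj in auto)
  have sub: "(\<Union>v\<in>M. c v) \<subseteq> S" unfolding c_def by auto
  have a3: "card (\<Union>v\<in>M. c v) \<le> card S" by (rule card_mono[OF S(1) sub])
  have eqs: "(\<Sum>v\<in>M. PT v - 1) = (\<Sum>v\<in>M. card (c v))" using a1 a2 a3 S(3) unfolding \<sigma>_def by linarith
  have cv: "card (c v) = PT v - 1" if "v \<in> M" for v
    using sum_mono_inv[OF eqs _ that M_finite] lower_v2[OF S(2,1)] unfolding c_def by metis
  have "(\<Union>v\<in>M. c v) = S" using card_subset_eq[OF S(1) sub] a1 a2 a3 S(3) by linarith
  moreover have "choice c" unfolding choice_def
  proof (intro ballI conjI)
    fix v assume vM: "v \<in> M"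
    show "finite (c v)" using S(1) unfolding c_def by simp
    show "card (c v) = PT v - 1" using cv[OF vM] .
    show "v \<notin> c v" unfolding c_def X_def by blast
    have "card (gg v ` c v) \<le> card (c v)" using card_image_le S(1) unfolding c_def by blast
    moreover have "PT v - 1 \<le> card (gg v ` c v)" using lower_v(1)[OF S(2,1) vM] unfolding c_def .
    ultimately have "card (gg v ` c v) = card (c v)" using cv[OF vM] by simp
    then have "inj_on (gg v) (c v)" using S(1) unfolding c_def by (intro eq_card_imp_inj_on) auto
    moreover have "\<forall>x\<in>c v. gg v x \<in> bp v \<and> x \<in> gg v x" using gg unfolding c_def by blast
    ultimately show "\<exists>g. inj_on g (c v) \<and> (\<forall>x\<in>c v. g x \<in> bp v \<and> x \<in> g x)" by blast
  qed
  ultimately show ?thesis by blast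
qed

lemma md: "metric_dim V E = enat \<sigma>"
proof -
  obtain c where c: "choice c" using choice_ex by blast
  have ex: "\<exists>S. finite S \<and> resolving V E S" using R0 .
  have "(LEAST n. \<exists>S. finite S \<and> resolving V E S \<and> card S = n) = \<sigma>"
  proof (rule Least_equality)
    show "\<exists>S. finite S \<and> resolving V E S \<and> card S = \<sigma>" using choice_card[OF c] suff[OF c] by blast
    show "\<sigma> \<le> y" if "\<exists>S. finite S \<and> resolving V E S \<and> card S = y" for y
      using that lower by blast
  qed
  then show ?thesis unfolding metric_dim_def using ex by simp
qed

lemma sum_any: "Sum_any (\<lambda>v. if v \<in> V \<and> 3 \<le> deg E v then max (PT v - 1) 0 else 0) = \<sigma>"
proof -
  let ?f = "\<lambda>v. if v \<in> V \<and> 3 \<le> deg E v then max (PT v - 1) 0 else 0"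
  have "{v. ?f v \<noteq> 0} \<subseteq> M" unfolding M_def by auto
  then have "Sum_any ?f = sum ?f M" by (rule Sum_any.expand_superset[OF M_finite])
  also have "\<dots> = \<sigma>" unfolding \<sigma>_def
    by (rule sum.cong) (use M_deg in \<open>auto simp: M_def\<close>)
  finally show ?thesis .
qed

end

lemma mn_intro:
  assumes "tree V E" "locally_finite V E" "\<exists>v\<in>V. 3 \<le> deg E v" "metric_dim V E \<noteq> \<infinity>"
  shows "mn V E"
proof -
  have "\<exists>R. finite R \<and> resolving V E R"
    using assms(4) unfolding metric_dim_def by (auto split: if_splits)
  then show ?thesis using assms unfolding mn_def mn_axioms_def trlf_def trlf_axioms_def tr_def by blast
qed

theorem theorem4:
  fixes V :: "'a set" and E :: "'a \<Rightarrow> 'a \<Rightarrow> bool"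
  assumes "tree V E"
    and "infinite V"
    and "locally_finite V E"
    and "\<exists>v\<in>V. 3 \<le> deg E v"
    and "metric_dim V E \<noteq> \<infinity>"
  shows "metric_dim V E =
           enat (Sum_any (\<lambda>v. if v \<in> V \<and> 3 \<le> deg E v then max (P_T V E v - 1) 0 else 0))
       \<and> (\<forall>S. metric_basis V E S \<longleftrightarrow>
            (\<exists>c :: 'a \<Rightarrow> 'a set.
               (\<forall>v\<in>V. 2 \<le> P_T V E v \<longrightarrow>
                  finite (c v) \<and> card (c v) = P_T V E v - 1 \<and> v \<notin> c v \<and>
                  (\<exists>g. inj_on g (c v) \<and> (\<forall>x\<in>c v. g x \<in> branch_paths V E v \<and> x \<in> g x)))
             \<and> S = (\<Union>v\<in>{v\<in>V. 2 \<le> P_T V E v}. c v)))"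
proof -
  interpret mn V E using mn_intro[OF assms(1,3,4,5)] .
  have Meq: "{v\<in>V. 2 \<le> P_T V E v} = M" unfolding M_def by simp
  have ch: "(\<forall>v\<in>V. 2 \<le> P_T V E v \<longrightarrow>
                  finite (c v) \<and> card (c v) = P_T V E v - 1 \<and> v \<notin> c v \<and>
                  (\<exists>g. inj_on g (c v) \<and> (\<forall>x\<in>c v. g x \<in> branch_paths V E v \<and> x \<in> g x)))
           \<longleftrightarrow> choice c" for c
    unfolding choice_def M_def by blast
  have part1: "metric_dim V E =
           enat (Sum_any (\<lambda>v. if v \<in> V \<and> 3 \<le> deg E v then max (P_T V E v - 1) 0 else 0))"
    using md sum_any by simp
  have part2: "metric_basis V E S \<longleftrightarrow> (\<exists>c. choice c \<and> S = (\<Union>v\<in>M. c v))" for S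
  proof
    assume "metric_basis V E S"
    then have "finite S" "resolving V E S" "card S = \<sigma>" unfolding metric_basis_def md by auto
    then show "\<exists>c. choice c \<and> S = (\<Union>v\<in>M. c v)" by (rule basis_choice)
  next
    assume "\<exists>c. choice c \<and> S = (\<Union>v\<in>M. c v)"
    then obtain c where c: "choice c" "S = (\<Union>v\<in>M. c v)" by blast
    show "metric_basis V E S" unfolding metric_basis_def md c(2)
      using choice_card[OF c(1)] suff[OF c(1)] by simp
  qed
  show ?thesis
  proof (rule conjI[OF part1], intro allI)
    fix S
    show "metric_basis V E S \<longleftrightarrow>
            (\<exists>c :: 'a \<Rightarrow> 'a set.
               (\<forall>v\<in>V. 2 \<le> P_T V E v \<longrightarrow>
                  finite (c v) \<and> card (c v) = P_T V E v - 1 \<and> v \<notin> c v \<and>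
                  (\<exists>g. inj_on g (c v) \<and> (\<forall>x\<in>c v. g x \<in> branch_paths V E v \<and> x \<in> g x)))
             \<and> S = (\<Union>v\<in>{v\<in>V. 2 \<le> P_T V E v}. c v))"
      unfolding Meq ch by (rule part2)
  qed
qed

end
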